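(* Let $D_{28}$ be the $28\times 28$ integer matrix $\begin{pmatrix} A & B\\ -B^T & A^T\end{pmatrix}$, where $A$ and $B$ are $14\times 14$ negacirculant matrices with first rows $r_A=(0,1,2,0,0,0,0,0,0,0,0,0,2,1)$ and $r_B=(-1,0,1,-1,0,2,-1,2,0,1,1,0,-1,2)$. (This matrix satisfies $D_{28}D_{28}^T=29I$ and $D_{28}^T=-D_{28}$.) Let $C_5(D_{28})$ be the $\mathbb{Z}_5$-code of length $56$ with generator matrix $(I\ \ D_{28})$, entries read modulo $5$. Then $A_5(C_5(D_{28}))$ contains a $k$-frame for every positive integer $k\ge 5$ that is not of the form $2^{m_1}3^{m_2}7^{m_3}17^{m_4}23^{m_5}$ with $m_1,\dots,m_5$ non-negative integers.
   Context: An $N\times N$ negacirculant matrix with first row $(r_0,\dots,r_{N-1})$ is the matrix whose $(i,j)$ entry ($0\le i,j\le N-1$) is $r_{j-i}$ if $j\ge i$ and $-r_{N+j-i}$ if $j<i$. Construction A: with $\rho:\mathbb{Z}_k\to\mathbb{Z}$ sending $0,1,\dots,k-1$ to $0,1,\dots,k-1$, for a $\mathbb{Z}_k$-code $C$ of length $N$ set $A_k(C)=\frac{1}{\sqrt{k}}\{\rho(C)+k\mathbb{Z}^N\}$. A $t$-frame of a lattice in dimension $N$ is a set of $N$ lattice vectors $f_1,\dots,f_N$ with $(f_i,f_j)=t\,\delta_{i,j}$. *)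

theory Defs
  imports Complex_Main
begin

text \<open>Matrices and vectors are functions on nat indices (0-based), only the entries
  with indices below the stated size being relevant.\<close>

definition negacirc :: "nat \<Rightarrow> (nat \<Rightarrow> int) \<Rightarrow> nat \<Rightarrow> nat \<Rightarrow> int" where
  "negacirc N r i j = (if j \<ge> i then r (j - i) else - r (N + j - i))"

definition rA :: "int list" where
  "rA = [0,1,2,0,0,0,0,0,0,0,0,0,2,1]"

definition rB :: "int list" where
  "rB = [-1,0,1,-1,0,2,-1,2,0,1,1,0,-1,2]"

definition matA :: "nat \<Rightarrow> nat \<Rightarrow> int" where
  "matA = negacirc 14 (\<lambda>n. rA ! n)"

definition matB :: "nat \<Rightarrow> nat \<Rightarrow> int" where
  "matB = negacirc 14 (\<lambda>n. rB ! n)"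

definition D28 :: "nat \<Rightarrow> nat \<Rightarrow> int" where
  "D28 i j =
     (if i < 14 then (if j < 14 then matA i j else matB i (j - 14))
      else (if j < 14 then - matB j (i - 14) else matA (j - 14) (i - 14)))"

text \<open>The Z_k-code of length N generated by the rows of the m x N integer matrix G
  (entries read modulo k); codewords are represented by their representatives in
  {0..k-1}, and are 0 outside the coordinates 0..N-1.\<close>
definition gen_code :: "int \<Rightarrow> nat \<Rightarrow> nat \<Rightarrow> (nat \<Rightarrow> nat \<Rightarrow> int) \<Rightarrow> (nat \<Rightarrow> int) set" where
  "gen_code k m N G = {c. \<exists>u :: nat \<Rightarrow> int.
      c = (\<lambda>j. if j < N then (\<Sum>i<m. u i * G i j) mod k else 0)}"

definition G_C5 :: "nat \<Rightarrow> nat \<Rightarrow> int" where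
  "G_C5 i j = (if j < 28 then (if i = j then 1 else 0) else D28 i (j - 28))"

definition C5_D28 :: "(nat \<Rightarrow> int) set" where
  "C5_D28 = gen_code 5 28 56 G_C5"

definition constructionA :: "nat \<Rightarrow> nat \<Rightarrow> (nat \<Rightarrow> int) set \<Rightarrow> (nat \<Rightarrow> real) set" where
  "constructionA k N C = {x. \<exists>c\<in>C. \<exists>z :: nat \<Rightarrow> int. (\<forall>j\<ge>N. z j = 0) \<and>
      x = (\<lambda>j. (of_int (c j) + of_nat k * of_int (z j)) / sqrt (of_nat k))}"

definition has_frame :: "(nat \<Rightarrow> real) set \<Rightarrow> nat \<Rightarrow> real \<Rightarrow> bool" where
  "has_frame L N t = (\<exists>f :: nat \<Rightarrow> nat \<Rightarrow> real.
      (\<forall>i<N. f i \<in> L) \<and>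
      (\<forall>i<N. \<forall>j<N. (\<Sum>l<N. f i l * f j l) = (if i = j then t else 0)))"

end

theory Submission
  imports Defs "HOL-Computational_Algebra.Primes" "HOL-Library.Discrete_Functions"
begin


definition sum4 :: "int \<Rightarrow> bool" where
  "sum4 n \<longleftrightarrow> (\<exists>a b c d. n = a^2+b^2+c^2+d^2)"

lemma sum4_mult:
  assumes "sum4 m" "sum4 n" shows "sum4 (m*n)"
proof -
  obtain a b c d where m: "m = a^2+b^2+c^2+d^2" using assms(1) sum4_def by blast
  obtain e f g h where n: "n = e^2+f^2+g^2+h^2" using assms(2) sum4_def by blast
  have "m*n = (a*e+b*f+c*g+d*h)^2 + (a*f-b*e+c*h-d*g)^2 + (a*g-b*h-c*e+d*f)^2 + (a*h+b*g-c*f-d*e)^2"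
    unfolding m n by (simp add: power2_eq_square algebra_simps)
  thus ?thesis unfolding sum4_def by blast
qed

lemma sum4_half_core:
  fixes x y z w m :: int
  assumes "x^2+y^2+z^2+w^2 = 2*m" "even (x+y)" "even (z+w)"
  shows "sum4 m"
proof -
  obtain X where X: "x+y = 2*X" using assms(2) by blast
  obtain Y where Y: "x-y = 2*Y" using assms(2) by (metis dvd_def even_add even_diff)
  obtain Z where Z: "z+w = 2*Z" using assms(3) by blast
  obtain W where W: "z-w = 2*W" using assms(3) by (metis dvd_def even_add even_diff)
  have "(x+y)^2 + (x-y)^2 + (z+w)^2 + (z-w)^2 = 2*(x^2+y^2+z^2+w^2)"
    by (simp add: power2_eq_square algebra_simps)
  hence "(2*X)^2 + (2*Y)^2 + (2*Z)^2 + (2*W)^2 = 2*(2*m)" using assms(1) X Y Z W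
    by simp
  hence "4*(X^2+Y^2+Z^2+W^2) = 4*m"
    by (simp add: power2_eq_square algebra_simps)
  hence "m = X^2+Y^2+Z^2+W^2" by simp
  thus ?thesis unfolding sum4_def by blast
qed

lemma even_sq_minus: "even ((x::int)^2 - x)"
proof -
  have "(x::int)^2 - x = x*(x-1)" by (simp add: power2_eq_square algebra_simps)
  thus ?thesis by simp
qed

lemma sum4_half:
  fixes x y z w m :: int
  assumes "x^2+y^2+z^2+w^2 = 2*m"
  shows "sum4 m"
proof -
  have "even (x^2+y^2+z^2+w^2 - (x+y+z+w))"
  proof -
    have "x^2+y^2+z^2+w^2 - (x+y+z+w) = (x^2-x)+(y^2-y)+(z^2-z)+(w^2-w)" by simp
    thus ?thesis using even_sq_minus[of x] even_sq_minus[of y] even_sq_minus[of z] even_sq_minus[of w]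
      by simp
  qed
  moreover have "even (x^2+y^2+z^2+w^2)" using assms by simp
  ultimately have "even ((x^2+y^2+z^2+w^2) - (x^2+y^2+z^2+w^2 - (x+y+z+w)))" using dvd_diff by blast
  moreover have e: "(x^2+y^2+z^2+w^2) - (x^2+y^2+z^2+w^2 - (x+y+z+w)) = x+y+z+w" by simp
  ultimately have ev: "even (x+y+z+w)" by (simp only: e)
  show ?thesis
  proof (cases "even (x+y)")
    case True
    hence "even (z+w)" using ev by (metis add.assoc even_add)
    thus ?thesis using sum4_half_core[OF assms True] by blast
  next
    case F1: False
    show ?thesis
    proof (cases "even (x+z)")
      case True
      have "y+w = (x+y+z+w) - (x+z)" by simp
      hence "even (y+w)" using ev True by (metis dvd_diff)
      moreover have "x^2+z^2+y^2+w^2 = 2*m" using assms by simp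
      ultimately show ?thesis using sum4_half_core True by blast
    next
      case False
      have "even ((x+y)+(x+z))" using F1 False by simp
      hence "even ((x+y)+(x+z) - 2*x)" by (rule dvd_diff) simp
      hence "even (y+z)" by (simp add: algebra_simps)
      moreover have "x+w = (x+y+z+w) - (y+z)" by simp
      hence "even (x+w)" using ev calculation by (metis dvd_diff)
      note this calculation
      moreover have "x^2+w^2+y^2+z^2 = 2*m" using assms by simp
      ultimately show ?thesis using sum4_half_core by blast
    qed
  qed
qed


lemma sum4_third_core:
  fixes x y z w m :: int
  assumes eq: "x^2+y^2+z^2+w^2 = 3*m" and h: "x mod 3 = 1" "y mod 3 = 1" "z mod 3 = 1" "w mod 3 = 0"
  shows "sum4 m"
proof -
  have "3 dvd (x+y+z)" using h by presburger
  then obtain A where A: "x+y+z = 3*A" by blast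
  have "3 dvd (x-y+w)" using h by presburger
  then obtain B where B: "x-y+w = 3*B" by blast
  have "3 dvd (x-z-w)" using h by presburger
  then obtain C where C: "x-z-w = 3*C" by blast
  have "3 dvd (y-z+w)" using h by presburger
  then obtain D where D: "y-z+w = 3*D" by blast
  have "(x+y+z)^2+(x-y+w)^2+(x-z-w)^2+(y-z+w)^2 = 3*(x^2+y^2+z^2+w^2)"
    by (simp add: power2_eq_square algebra_simps)
  hence "(3*A)^2+(3*B)^2+(3*C)^2+(3*D)^2 = 3*(3*m)" using A B C D eq by simp
  hence "9*(A^2+B^2+C^2+D^2) = 9*m" by (simp add: power2_eq_square algebra_simps)
  hence "m = A^2+B^2+C^2+D^2" by simp
  thus ?thesis unfolding sum4_def by blast
qed

lemma sq_mod3: fixes v :: int shows "v^2 mod 3 = (if 3 dvd v then 0 else 1)"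
proof -
  have "v^2 mod 3 = (v mod 3)^2 mod 3" by (simp add: power_mod)
  moreover have "v mod 3 = 0 \<or> v mod 3 = 1 \<or> v mod 3 = 2" by presburger
  ultimately show ?thesis by (auto simp: power2_eq_square)
qed

lemma norm3: fixes v :: int assumes "\<not> 3 dvd v" shows "\<exists>v'. v'^2 = v^2 \<and> v' mod 3 = 1"
proof (cases "v mod 3 = 1")
  case True thus ?thesis by blast
next
  case False
  hence "(-v) mod 3 = 1" using assms by presburger
  moreover have "(-v)^2 = v^2" by simp
  ultimately show ?thesis by blast
qed

lemma third_aux:
  fixes x y z w m :: int
  assumes eq: "x^2+y^2+z^2+w^2 = 3*m" and h: "\<not> 3 dvd x" "\<not> 3 dvd y" "\<not> 3 dvd z" "3 dvd w"
  shows "sum4 m"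
proof -
  obtain x' where x': "x'^2 = x^2" "x' mod 3 = 1" using norm3[OF h(1)] by blast
  obtain y' where y': "y'^2 = y^2" "y' mod 3 = 1" using norm3[OF h(2)] by blast
  obtain z' where z': "z'^2 = z^2" "z' mod 3 = 1" using norm3[OF h(3)] by blast
  have w0: "w mod 3 = 0" using h(4) by simp
  have e': "x'^2+y'^2+z'^2+w^2 = 3*m" using eq x' y' z' by simp
  show ?thesis by (rule sum4_third_core[OF e' x'(2) y'(2) z'(2) w0])
qed

lemma cnt3:
  fixes X Y Z W m :: int
  assumes "X+Y+Z+W = 3*m" "X mod 3 = (if dx then 0 else 1)" "Y mod 3 = (if dy then 0 else 1)"
    "Z mod 3 = (if dz then 0 else 1)" "W mod 3 = (if dw then 0 else 1)" "\<not>(dx \<and> dy \<and> dz \<and> dw)"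
  shows "(dx \<and> \<not>dy \<and> \<not>dz \<and> \<not>dw) \<or> (\<not>dx \<and> dy \<and> \<not>dz \<and> \<not>dw) \<or>
         (\<not>dx \<and> \<not>dy \<and> dz \<and> \<not>dw) \<or> (\<not>dx \<and> \<not>dy \<and> \<not>dz \<and> dw)"
  using assms by (cases dx; cases dy; cases dz; cases dw; simp; presburger)

lemma sum4_third:
  fixes x y z w m :: int
  assumes eq: "x^2+y^2+z^2+w^2 = 3*m" and nz: "\<not>(3 dvd x \<and> 3 dvd y \<and> 3 dvd z \<and> 3 dvd w)"
  shows "sum4 m"
proof -
  have c: "(3 dvd x \<and> \<not>3 dvd y \<and> \<not>3 dvd z \<and> \<not>3 dvd w) \<or> (\<not>3 dvd x \<and> 3 dvd y \<and> \<not>3 dvd z \<and> \<not>3 dvd w) \<or>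
         (\<not>3 dvd x \<and> \<not>3 dvd y \<and> 3 dvd z \<and> \<not>3 dvd w) \<or> (\<not>3 dvd x \<and> \<not>3 dvd y \<and> \<not>3 dvd z \<and> 3 dvd w)"
    by (rule cnt3[OF eq sq_mod3 sq_mod3 sq_mod3 sq_mod3 nz])
  have e1: "y^2+z^2+w^2+x^2 = 3*m" "x^2+z^2+w^2+y^2 = 3*m" "x^2+y^2+w^2+z^2 = 3*m" using eq by simp_all
  show ?thesis using c third_aux[OF e1(1)] third_aux[OF e1(2)] third_aux[OF e1(3)] third_aux[OF eq] by blast
qed

lemma sq_inj:
  fixes P a1 a2 :: int
  assumes "prime P" "0 \<le> a1" "0 \<le> a2" "2*a1 < P" "2*a2 < P" "P dvd a1^2 - a2^2"
  shows "a1 = a2"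
proof -
  have "a1^2 - a2^2 = (a1 - a2)*(a1+a2)" by (simp add: power2_eq_square algebra_simps)
  hence "P dvd (a1-a2) \<or> P dvd (a1+a2)" using assms(1,6) prime_dvd_mult_iff by metis
  thus ?thesis
  proof
    assume d: "P dvd (a1-a2)"
    show ?thesis
    proof (rule ccontr)
      assume "a1 \<noteq> a2"
      hence "\<bar>P\<bar> \<le> \<bar>a1-a2\<bar>" using dvd_imp_le_int[OF _ d] by simp
      thus False using assms by simp
    qed
  next
    assume d: "P dvd (a1+a2)"
    show ?thesis
    proof (rule ccontr)
      assume "a1 \<noteq> a2"
      hence "a1 + a2 \<noteq> 0" using assms by simp
      hence "\<bar>P\<bar> \<le> \<bar>a1+a2\<bar>" using dvd_imp_le_int[OF _ d] by simp
      thus False using assms by simp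
    qed
  qed
qed

lemma minus_one_sq:
  assumes p: "prime (p::nat)" "odd p"
  shows "\<exists>a b::int. int p dvd a^2+b^2+1"
proof (rule ccontr)
  assume na: "\<not> ?thesis"
  define P where "P = int p"
  have pP: "prime P" using p P_def by simp
  have P2: "P \<ge> 2" using prime_ge_2_int[OF pP] .
  define h where "h = (P - 1) div 2"
  have hP: "2*h + 1 = P" using p P_def h_def by (simp add: odd_pos)
  define S where "S = {0..h}"
  define f where "f = (\<lambda>a. a^2 mod P)"
  define g where "g = (\<lambda>b. (-1 - b^2) mod P)"
  have injf: "inj_on f S"
  proof (rule inj_onI)
    fix a1 a2 assume "a1 \<in> S" "a2 \<in> S" "f a1 = f a2"
    thus "a1 = a2" using sq_inj[OF pP] hP unfolding S_def f_def by (simp add: mod_eq_dvd_iff)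
  qed
  have injg: "inj_on g S"
  proof (rule inj_onI)
    fix a1 a2 assume a: "a1 \<in> S" "a2 \<in> S" "g a1 = g a2"
    hence "P dvd a2^2 - a1^2" unfolding g_def by (simp add: mod_eq_dvd_iff)
    thus "a1 = a2" using sq_inj[OF pP, of a2 a1] hP a unfolding S_def by simp
  qed
  have disj: "f ` S \<inter> g ` S = {}"
  proof (rule ccontr)
    assume "f ` S \<inter> g ` S \<noteq> {}"
    then obtain a b where "f a = g b" by blast
    hence "P dvd a^2 - (-1 - b^2)" unfolding f_def g_def by (simp add: mod_eq_dvd_iff)
    hence "int p dvd a^2+b^2+1" unfolding P_def by (simp add: algebra_simps)
    thus False using na by blast
  qed
  have sub: "f ` S \<union> g ` S \<subseteq> {0..<P}" unfolding f_def g_def using P2 by auto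
  have "card (f ` S \<union> g ` S) = card (f ` S) + card (g ` S)"
    using disj by (intro card_Un_disjoint) (auto simp: S_def)
  also have "\<dots> = 2 * card S" using card_image[OF injf] card_image[OF injg] by simp
  also have "card S = nat (h+1)" unfolding S_def by simp
  finally have "card (f ` S \<union> g ` S) = nat P + 1" using hP P2 by (simp; presburger)
  moreover have "card (f ` S \<union> g ` S) \<le> card {0..<P}" using sub by (intro card_mono) auto
  ultimately show False by simp
qed

lemma sum4_prime:
  assumes p: "prime (p::nat)"
  shows "sum4 (int p)"
proof -
  consider "p = 2" | "p = 3" | "p > 3" "odd p"
    using p prime_ge_2_nat[OF p] by (metis le_neq_implies_less numeral_eq_Suc prime_odd_nat  Suc_leI eval_nat_numeral(3) less_Suc_eq)
  thus ?thesis
  proof cases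
    case 1 thus ?thesis unfolding sum4_def by (rule_tac x=1 in exI, rule_tac x=1 in exI, rule_tac x=0 in exI, rule_tac x=0 in exI) simp
  next
    case 2 thus ?thesis unfolding sum4_def by (rule_tac x=1 in exI, rule_tac x=1 in exI, rule_tac x=1 in exI, rule_tac x=0 in exI) simp
  next
    case 3
    define P where "P = int p"
    obtain a b where ab: "P dvd a^2+b^2+1" using minus_one_sq[OF p 3(2)] P_def by blast
    then obtain c where c: "a^2+b^2+1 = P*c" by blast
    define s where "s = floor_sqrt p"
    have s1: "s^2 \<le> p" unfolding s_def by simp
    have s2: "p < (Suc s)^2" unfolding s_def by (rule Suc_floor_sqrt_power2_gt)
    have s3: "s^2 \<noteq> p"
    proof
      assume e: "s^2 = p"
      hence "s dvd p" by (metis dvd_triv_left power2_eq_square)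
      hence "s = 1 \<or> s = p" using p prime_nat_iff by blast
      thus False using e 3 by (auto simp: power2_eq_square)
    qed
    hence sp: "s^2 < p" using s1 by simp
    define S where "S = {0..s} \<times> {0..s} \<times> {0..s} \<times> {0..s}"
    define phi where "phi = (\<lambda>(x::nat,y::nat,z::nat,w::nat).
        ((int z - a*int x - b*int y) mod P, (int w - b*int x + a*int y) mod P))"
    have cardS: "card S = (Suc s)^4" unfolding S_def by (simp add: card_cartesian_product power4_eq_xxxx)
    have P0: "P > 0" using 3 P_def by simp
    have sub: "phi ` S \<subseteq> {0..<P} \<times> {0..<P}" unfolding phi_def using P0 by auto
    have cardT: "card ({0..<P} \<times> {0..<P}) = p^2" unfolding P_def by (simp add: card_cartesian_product power2_eq_square)
    have "p^2 < ((Suc s)^2)^2" using s2 by (intro power_strict_mono) auto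
    also have "((Suc s)^2)^2 = (Suc s)^4" by (simp add: power_mult[symmetric])
    finally have lt: "card ({0..<P} \<times> {0..<P}) < card S" using cardS cardT by simp
    have "\<not> inj_on phi S"
    proof
      assume "inj_on phi S"
      hence "card S \<le> card ({0..<P} \<times> {0..<P})" using sub by (intro card_inj_on_le) auto
      thus False using lt by simp
    qed
    then obtain v1 v2 where v: "v1 \<in> S" "v2 \<in> S" "v1 \<noteq> v2" "phi v1 = phi v2" unfolding inj_on_def by blast
    obtain x1 y1 z1 w1 where v1: "v1 = (x1,y1,z1,w1)" by (metis prod.collapse)
    obtain x2 y2 z2 w2 where v2: "v2 = (x2,y2,z2,w2)" by (metis prod.collapse)
    define dx where "dx = int x1 - int x2"
    define dy where "dy = int y1 - int y2"
    define dz where "dz = int z1 - int z2"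
    define dw where "dw = int w1 - int w2"
    have bnd: "x1 \<le> s" "x2 \<le> s" "y1 \<le> s" "y2 \<le> s" "z1 \<le> s" "z2 \<le> s" "w1 \<le> s" "w2 \<le> s"
      using v(1,2) unfolding v1 v2 S_def by auto
    have sq: "d^2 \<le> int s^2" if "\<bar>d\<bar> \<le> int s" for d
      using that abs_le_square_iff[of d "int s"] by simp
    have bx: "dx^2 \<le> int s^2" using bnd by (intro sq) (auto simp: dx_def)
    have by': "dy^2 \<le> int s^2" using bnd by (intro sq) (auto simp: dy_def)
    have bz: "dz^2 \<le> int s^2" using bnd by (intro sq) (auto simp: dz_def)
    have bw: "dw^2 \<le> int s^2" using bnd by (intro sq) (auto simp: dw_def)
    have m1: "P dvd dz - a*dx - b*dy" using v(4) unfolding v1 v2 phi_def dx_def dy_def dz_def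
      by (auto simp: mod_eq_dvd_iff algebra_simps)
    have m2: "P dvd dw - b*dx + a*dy" using v(4) unfolding v1 v2 phi_def dx_def dy_def dw_def
      by (auto simp: mod_eq_dvd_iff algebra_simps)
    obtain k1 where k1: "dz = a*dx + b*dy + P*k1" using m1 by (metis dvd_def diff_diff_eq eq_diff_eq add.commute)
    obtain k2 where k2: "dw = b*dx - a*dy + P*k2" using m2 by (metis dvd_def diff_add_eq eq_diff_eq add.commute diff_diff_eq2)
    define N where "N = dx^2+dy^2+dz^2+dw^2"
    have "N = P * (c*(dx^2+dy^2) + 2*k1*(a*dx+b*dy) + P*k1^2 + 2*k2*(b*dx-a*dy) + P*k2^2)"
    proof -
      have "N = (a^2+b^2+1)*(dx^2+dy^2) + P*(2*k1*(a*dx+b*dy) + P*k1^2 + 2*k2*(b*dx-a*dy) + P*k2^2)"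
        unfolding N_def k1 k2 by (simp add: power2_eq_square algebra_simps)
      thus ?thesis unfolding c by (simp add: algebra_simps)
    qed
    then obtain r where r: "N = P*r" by blast
    have "N \<le> 4 * int s^2" unfolding N_def using bx by' bz bw by simp
    also have "\<dots> < 4*P" using sp unfolding P_def by (simp add: of_nat_less_iff[symmetric])
    finally have Nl: "N < 4*P" .
    have "dx \<noteq> 0 \<or> dy \<noteq> 0 \<or> dz \<noteq> 0 \<or> dw \<noteq> 0" using v(3) unfolding v1 v2 dx_def dy_def dz_def dw_def by auto
    hence Np: "N > 0" unfolding N_def by (auto simp: add_pos_nonneg add_nonneg_pos)
    have "r > 0" using Np r P0 by (simp add: zero_less_mult_iff)
    moreover have "r < 4" using Nl r P0 by simp
    ultimately consider "r = 1" | "r = 2" | "r = 3" by linarith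
    thus ?thesis
    proof cases
      case 1
      hence "int p = dx^2+dy^2+dz^2+dw^2" using r unfolding N_def P_def by simp
      thus ?thesis unfolding sum4_def by blast
    next
      case 2 thus ?thesis using r sum4_half[of dx dy dz dw P] unfolding N_def P_def by (simp add: mult.commute)
    next
      case 3
      have "\<not>(3 dvd dx \<and> 3 dvd dy \<and> 3 dvd dz \<and> 3 dvd dw)"
      proof
        assume h: "3 dvd dx \<and> 3 dvd dy \<and> 3 dvd dz \<and> 3 dvd dw"
        hence "9 dvd N" unfolding N_def by (auto simp: power2_eq_square intro!: dvd_add mult_dvd_mono[of 3 _ 3, simplified])
        hence "9 dvd 3*P" using r 3 by (simp add: mult.commute)
        hence "3 dvd P" by presburger
        hence "3 dvd p" unfolding P_def by presburger
        hence "3 = p" using p prime_nat_iff by (metis numeral_eq_one_iff semiring_norm(86))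
        thus False using \<open>p > 3\<close> by simp
      qed
      thus ?thesis using r 3 sum4_third[of dx dy dz dw P] unfolding N_def P_def by (simp add: mult.commute)
    qed
  qed
qed

theorem lagrange4: "sum4 (int n)"
proof (induction n rule: less_induct)
  case (less n)
  show ?case
  proof (cases "n \<le> 1")
    case True
    hence "int n = (int n)^2 + 0^2 + 0^2 + 0^2" by (cases n) (auto simp: power2_eq_square)
    thus ?thesis unfolding sum4_def by blast
  next
    case False
    then obtain p where p: "prime p" "p dvd n" using prime_factor_nat by (metis le_refl)
    then obtain m where m: "n = p*m" by blast
    have m0: "m > 0" using False m by (cases m) auto
    have "1*m < p*m" using prime_gt_1_nat[OF p(1)] m0 by (intro mult_strict_right_mono) auto
    hence "m < n" using m by simp
    hence "sum4 (int m)" by (rule less.IH)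
    thus ?thesis using sum4_mult[OF sum4_prime[OF p(1)]] m by simp
  qed
qed



definition Mf :: "int \<Rightarrow> (nat \<Rightarrow> int) \<Rightarrow> (nat \<Rightarrow> nat \<Rightarrow> nat) \<Rightarrow> (nat \<Rightarrow> nat \<Rightarrow> int) \<Rightarrow> nat \<Rightarrow> nat \<Rightarrow> int" where
  "Mf t x P S i l = t * (if l = i then 1 else 0) + (\<Sum>a<4. x a * (if l = P a i then S a i else 0))"

definition Ff :: "int \<Rightarrow> int \<Rightarrow> (nat \<Rightarrow> int) \<Rightarrow> (nat \<Rightarrow> nat \<Rightarrow> int) \<Rightarrow> (nat \<Rightarrow> nat \<Rightarrow> nat) \<Rightarrow> (nat \<Rightarrow> nat \<Rightarrow> int) \<Rightarrow> nat \<Rightarrow> nat \<Rightarrow> int" where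
  "Ff u t x G P S i l = u * G i l + 5 * Mf t x P S i l"

lemma sum_delta_r: "(\<Sum>l<(N::nat). f l * (if l = c then v else 0)) = (if c < N then f c * v else (0::int))"
proof -
  have "(\<Sum>l<N. f l * (if l = c then v else 0)) = (\<Sum>l<N. if l = c then f c * v else 0)"
    by (rule sum.cong) auto
  also have "\<dots> = (if c < N then f c * v else 0)" using sum.delta[of "{..<N}" c "\<lambda>_. f c * v"] by simp
  finally show ?thesis .
qed

lemma sum_delta_l: "(\<Sum>l<(N::nat). (if l = c then v else 0) * f l) = (if c < N then v * f c else (0::int))"
  using sum_delta_r[of f c v N] by (simp add: mult.commute)

lemma swap1: "(\<Sum>l<(N::nat). \<Sum>a<(M::nat). x a * f a l) = (\<Sum>a<M. x a * (\<Sum>l<N. f a l :: int))"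
  unfolding sum_distrib_left by (rule sum.swap)

lemma swap2: "(\<Sum>l<(N::nat). \<Sum>a<(M::nat). \<Sum>b<M. c a b * f a b l) = (\<Sum>a<M. \<Sum>b<M. c a b * (\<Sum>l<N. f a b l :: int))"
proof -
  have "(\<Sum>l<N. \<Sum>a<M. \<Sum>b<M. c a b * f a b l) = (\<Sum>a<M. \<Sum>l<N. \<Sum>b<M. c a b * f a b l)"
    by (rule sum.swap)
  also have "\<dots> = (\<Sum>a<M. \<Sum>b<M. \<Sum>l<N. c a b * f a b l)"
    by (rule sum.cong[OF refl], rule sum.swap)
  finally show ?thesis by (simp add: sum_distrib_left)
qed

lemma GM_sum:
  assumes "j < N" "\<forall>a<4. P a j < N"
  shows "(\<Sum>l<N. G i l * Mf t x P S j l) = t * G i j + (\<Sum>a<4. x a * (S a j * G i (P a j)))"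
proof -
  have "(\<Sum>l<N. G i l * Mf t x P S j l) = (\<Sum>l<N. t * (G i l * (if l = j then 1 else 0)) + (\<Sum>a<4. x a * (G i l * (if l = P a j then S a j else 0))))"
    unfolding Mf_def by (rule sum.cong) (simp_all add: algebra_simps sum_distrib_left)
  also have "\<dots> = t * (\<Sum>l<N. G i l * (if l = j then 1 else 0)) + (\<Sum>a<4. x a * (\<Sum>l<N. G i l * (if l = P a j then S a j else 0)))"
    by (simp add: sum.distrib sum_distrib_left[symmetric] swap1)
  also have "\<dots> = t * G i j + (\<Sum>a<4. x a * (S a j * G i (P a j)))"
    using assms by (simp add: sum_delta_r mult.commute)
  finally show ?thesis .
qed

lemma MM_sum:
  assumes "i < N" "j < N" "\<forall>a<4. P a j < N" "\<forall>a<4. P a i < N"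
  shows "(\<Sum>l<N. Mf t x P S i l * Mf t x P S j l) =
     t*t*(if i = j then 1 else 0) + t * (\<Sum>a<4. x a * ((if i = P a j then S a j else 0) + (if j = P a i then S a i else 0)))
     + (\<Sum>a<4. \<Sum>b<4. x a * x b * (if P a i = P b j then S a i * S b j else 0))"
proof -
  define d where "d = (\<lambda>c (l::nat). if l = c then (1::int) else 0)"
  define V where "V = (\<lambda>a k l. if l = P a k then S a k else (0::int))"
  have M: "Mf t x P S k l = t * d k l + (\<Sum>a<4. x a * V a k l)" for k l unfolding Mf_def d_def V_def by simp
  have "(\<Sum>l<N. Mf t x P S i l * Mf t x P S j l) =
     (\<Sum>l<N. t*t*(d i l * d j l) + t * (\<Sum>a<4. x a * (d i l * V a j l)) + t * (\<Sum>a<4. x a * (V a i l * d j l))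
       + (\<Sum>a<4. \<Sum>b<4. x a * x b * (V a i l * V b j l)))"
  proof (rule sum.cong[OF refl])
    fix l
    have pr: "(\<Sum>a<4. x a * V a i l) * (\<Sum>b<4. x b * V b j l) = (\<Sum>a<4. \<Sum>b<4. x a * x b * (V a i l * V b j l))"
      by (simp add: sum_product algebra_simps)
    have "(t * d i l + (\<Sum>a<4. x a * V a i l)) * (t * d j l + (\<Sum>a<4. x a * V a j l)) =
       t*t*(d i l * d j l) + t * ((\<Sum>a<4. x a * V a j l) * d i l) + t * ((\<Sum>a<4. x a * V a i l) * d j l)
        + (\<Sum>a<4. x a * V a i l) * (\<Sum>b<4. x b * V b j l)"
      by (simp add: algebra_simps)
    note ex = this
    show "Mf t x P S i l * Mf t x P S j l = t*t*(d i l * d j l) + t * (\<Sum>a<4. x a * (d i l * V a j l)) + t * (\<Sum>a<4. x a * (V a i l * d j l))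
       + (\<Sum>a<4. \<Sum>b<4. x a * x b * (V a i l * V b j l))"
    proof -
      have a1: "(\<Sum>a<4. x a * V a j l) * d i l = (\<Sum>a<4. x a * (d i l * V a j l))"
        by (subst mult.commute) (simp add: sum_distrib_left mult.left_commute)
      have a2: "(\<Sum>a<4. x a * V a i l) * d j l = (\<Sum>a<4. x a * (V a i l * d j l))"
        by (simp add: sum_distrib_right mult.assoc)
      show ?thesis unfolding M using ex unfolding a1 a2 pr by simp
    qed
  qed
  also have "\<dots> = t*t*(\<Sum>l<N. d i l * d j l) + t * (\<Sum>a<4. x a * (\<Sum>l<N. d i l * V a j l)) + t * (\<Sum>a<4. x a * (\<Sum>l<N. V a i l * d j l))
       + (\<Sum>a<4. \<Sum>b<4. x a * x b * (\<Sum>l<N. V a i l * V b j l))"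
    by (simp only: sum.distrib sum_distrib_left[symmetric] swap1 swap2)
  also have "(\<Sum>l<N. d i l * d j l) = (if i = j then 1 else 0)" unfolding d_def using assms
    by (simp add: sum_delta_r)
  also have "(\<lambda>a. x a * (\<Sum>l<N. d i l * V a j l)) = (\<lambda>a. x a * (if i = P a j then S a j else 0))"
    unfolding d_def V_def using assms by (simp add: sum_delta_l)
  also have "(\<lambda>a. x a * (\<Sum>l<N. V a i l * d j l)) = (\<lambda>a. x a * (if j = P a i then S a i else 0))"
    unfolding d_def V_def using assms by (simp add: sum_delta_r)
  also have "(\<lambda>a. \<Sum>b<4. x a * x b * (\<Sum>l<N. V a i l * V b j l)) = (\<lambda>a. \<Sum>b<4. x a * x b * (if P a i = P b j then S a i * S b j else 0))"
  proof (rule ext, rule sum.cong[OF refl])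
    fix a b assume "b \<in> {..<4::nat}"
    hence "P b j < N" using assms by simp
    thus "x a * x b * (\<Sum>l<N. V a i l * V b j l) = x a * x b * (if P a i = P b j then S a i * S b j else 0)"
      unfolding V_def by (simp add: sum_delta_r)
  qed
  finally show ?thesis by (simp add: sum.distrib algebra_simps sum_distrib_left)
qed

lemma gram_generic:
  fixes G :: "nat \<Rightarrow> nat \<Rightarrow> int" and P :: "nat \<Rightarrow> nat \<Rightarrow> nat" and S :: "nat \<Rightarrow> nat \<Rightarrow> int"
  assumes GG: "\<And>i j. i < N \<Longrightarrow> j < N \<Longrightarrow> (\<Sum>l<N. G i l * G j l) = (if i = j then 30 else 0)"
    and Gs: "\<And>i j. i < N \<Longrightarrow> j < N \<Longrightarrow> G i j + G j i = (if i = j then 2 else 0)"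
    and GV: "\<And>a i j. a < 4 \<Longrightarrow> i < N \<Longrightarrow> j < N \<Longrightarrow> S a j * G i (P a j) + S a i * G j (P a i) = 0"
    and Pb: "\<And>a i. a < 4 \<Longrightarrow> i < N \<Longrightarrow> P a i < N"
    and Vsk: "\<And>a i j. a < 4 \<Longrightarrow> i < N \<Longrightarrow> j < N \<Longrightarrow> (if i = P a j then S a j else 0) + (if j = P a i then S a i else 0) = 0"
    and VV: "\<And>a b i j. a < 4 \<Longrightarrow> b < 4 \<Longrightarrow> i < N \<Longrightarrow> j < N \<Longrightarrow>
        (if P a i = P b j then S a i * S b j else 0) + (if P b i = P a j then S b i * S a j else 0) = (if a = b \<and> i = j then 2 else 0)"
    and ij: "i < N" "j < N"
  shows "(\<Sum>l<N. Ff u t x G P S i l * Ff u t x G P S j l) =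
     (if i = j then 5 * (6*u^2 + 2*u*t + 5*t^2 + 5*(\<Sum>a<4. x a ^ 2)) else 0)"
proof -
  define M where "M = Mf t x P S"
  have Pi: "\<forall>a<4. P a i < N" "\<forall>a<4. P a j < N" using Pb ij by auto
  have "(\<Sum>l<N. Ff u t x G P S i l * Ff u t x G P S j l) =
      (\<Sum>l<N. u^2 * (G i l * G j l) + 5*u*(G i l * M j l + G j l * M i l) + 25 * (M i l * M j l))"
    unfolding Ff_def M_def by (rule sum.cong) (simp_all add: power2_eq_square algebra_simps)
  also have "\<dots> = u^2 * (\<Sum>l<N. G i l * G j l) + 5*u*((\<Sum>l<N. G i l * M j l) + (\<Sum>l<N. G j l * M i l)) + 25 * (\<Sum>l<N. M i l * M j l)"
    by (simp only: sum.distrib sum_distrib_left[symmetric])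
  also have "(\<Sum>l<N. G i l * M j l) + (\<Sum>l<N. G j l * M i l) = t * (G i j + G j i) + (\<Sum>a<4. x a * (S a j * G i (P a j) + S a i * G j (P a i)))"
    unfolding M_def using GM_sum[of j N P G i t x S] GM_sum[of i N P G j t x S] ij Pi
    by (simp add: sum.distrib algebra_simps)
  also have "(\<Sum>a<4. x a * (S a j * G i (P a j) + S a i * G j (P a i))) = 0"
    using GV ij by simp
  also have "(\<Sum>l<N. M i l * M j l) = t*t*(if i = j then 1 else 0) + t * (\<Sum>a<4. x a * ((if i = P a j then S a j else 0) + (if j = P a i then S a i else 0)))
     + (\<Sum>a<4. \<Sum>b<4. x a * x b * (if P a i = P b j then S a i * S b j else 0))"
    unfolding M_def using MM_sum[of i N j P t x S] ij Pi by simp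
  also have "(\<Sum>a<4. x a * ((if i = P a j then S a j else 0) + (if j = P a i then S a i else 0))) = 0"
    using Vsk ij by simp
  also have "(\<Sum>a<4. \<Sum>b<4. x a * x b * (if P a i = P b j then S a i * S b j else 0)) = (if i = j then (\<Sum>a<4. x a ^ 2) else 0)"
  proof -
    define c where "c = (\<lambda>a b. x a * x b * (if P a i = P b j then S a i * S b j else 0))"
    have "2 * (\<Sum>a<4. \<Sum>b<4. c a b) = (\<Sum>a<4. \<Sum>b<4. c a b) + (\<Sum>a<4. \<Sum>b<4. c b a)"
      by (simp add: sum.swap[of c])
    also have "\<dots> = (\<Sum>a<4. \<Sum>b<4. c a b + c b a)" by (simp add: sum.distrib)
    also have "\<dots> = (\<Sum>a<4. \<Sum>b<4. x a * x b * (if a = b \<and> i = j then 2 else 0))"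
    proof (intro sum.cong refl)
      fix a b assume "a \<in> {..<4::nat}" "b \<in> {..<4::nat}"
      hence e: "(if P a i = P b j then S a i * S b j else 0) + (if P b i = P a j then S b i * S a j else 0) = (if a = b \<and> i = j then 2 else 0)"
        using VV ij by simp
      have "c a b + c b a = x a * x b * ((if P a i = P b j then S a i * S b j else 0) + (if P b i = P a j then S b i * S a j else 0))"
        unfolding c_def by (simp only: distrib_left mult.commute mult.left_commute)
      thus "c a b + c b a = x a * x b * (if a = b \<and> i = j then 2 else 0)"
        unfolding e .
    qed
    also have "\<dots> = 2 * (if i = j then (\<Sum>a<4. x a ^ 2) else 0)"
      by (auto simp: power2_eq_square sum_distrib_left if_distrib sum.delta mult.commute cong: if_cong)
    finally show ?thesis unfolding c_def by simp
  qed
  finally show ?thesis using GG[OF ij] Gs[OF ij] by (simp add: power2_eq_square algebra_simps)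
qed




definition jq :: "nat \<Rightarrow> nat" where "jq m = (if m < 7 then m + 7 else m - 7)"
definition js :: "nat \<Rightarrow> int" where "js m = (if m < 7 then 1 else -1)"
definition rq :: "nat \<Rightarrow> nat" where "rq m = (if m = 0 then 0 else 14 - m)"
definition rs :: "nat \<Rightarrow> int" where "rs m = (if m = 0 then 1 else -1)"
definition qJ :: "nat \<Rightarrow> nat" where "qJ i = (if i < 14 then jq i else jq (i - 14) + 14)"
definition sJ :: "nat \<Rightarrow> int" where "sJ i = (if i < 14 then js i else js (i - 14))"
definition qX :: "nat \<Rightarrow> nat" where "qX i = (if i < 14 then rq i + 14 else rq (i - 14))"
definition sX :: "nat \<Rightarrow> int" where "sX i = (if i < 14 then rs i else - rs (i - 14))"
definition qY :: "nat \<Rightarrow> nat" where "qY i = qX (qJ i)"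
definition sY :: "nat \<Rightarrow> int" where "sY i = sJ i * sX (qJ i)"
definition bd :: "(nat \<Rightarrow> nat) \<Rightarrow> nat \<Rightarrow> nat" where "bd q i = (if i < 28 then q i else q (i - 28) + 28)"
definition bs :: "(nat \<Rightarrow> int) \<Rightarrow> nat \<Rightarrow> int" where "bs s i = (if i < 28 then s i else - s (i - 28))"
definition p2 :: "nat \<Rightarrow> nat" where "p2 i = (if i < 28 then i + 28 else i - 28)"
definition s2 :: "nat \<Rightarrow> int" where "s2 i = (if i < 28 then 1 else -1)"
definition PP :: "nat \<Rightarrow> nat \<Rightarrow> nat" where
  "PP a = (if a = 0 then bd qJ else if a = 1 then p2 else if a = 2 then bd qX else bd qY)"
definition SS :: "nat \<Rightarrow> nat \<Rightarrow> int" where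
  "SS a = (if a = 0 then bs sJ else if a = 1 then s2 else if a = 2 then bs sX else bs sY)"
definition Em :: "nat \<Rightarrow> nat \<Rightarrow> int" where
  "Em i l = (if i < 28 \<and> 28 \<le> l then D28 i (l - 28) else if 28 \<le> i \<and> l < 28 then D28 (i - 28) l else 0)"
definition Gm :: "nat \<Rightarrow> nat \<Rightarrow> int" where "Gm i l = (if i = l then 1 else 0) + Em i l"

lemma all_lt_list: "(\<forall>i<n. P i) \<longleftrightarrow> list_all P [0..<n]"
  by (auto simp: list_all_iff)

definition Dl :: "int list list" where "Dl = [[0,1,2,0,0,0,0,0,0,0,0,0,2,1,-1,0,1,-1,0,2,-1,2,0,1,1,0,-1,2], [-1,0,1,2,0,0,0,0,0,0,0,0,0,2,-2,-1,0,1,-1,0,2,-1,2,0,1,1,0,-1], [-2,-1,0,1,2,0,0,0,0,0,0,0,0,0,1,-2,-1,0,1,-1,0,2,-1,2,0,1,1,0], [0,-2,-1,0,1,2,0,0,0,0,0,0,0,0,0,1,-2,-1,0,1,-1,0,2,-1,2,0,1,1], [0,0,-2,-1,0,1,2,0,0,0,0,0,0,0,-1,0,1,-2,-1,0,1,-1,0,2,-1,2,0,1], [0,0,0,-2,-1,0,1,2,0,0,0,0,0,0,-1,-1,0,1,-2,-1,0,1,-1,0,2,-1,2,0], [0,0,0,0,-2,-1,0,1,2,0,0,0,0,0,0,-1,-1,0,1,-2,-1,0,1,-1,0,2,-1,2], [0,0,0,0,0,-2,-1,0,1,2,0,0,0,0,-2,0,-1,-1,0,1,-2,-1,0,1,-1,0,2,-1],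 [0,0,0,0,0,0,-2,-1,0,1,2,0,0,0,1,-2,0,-1,-1,0,1,-2,-1,0,1,-1,0,2], [0,0,0,0,0,0,0,-2,-1,0,1,2,0,0,-2,1,-2,0,-1,-1,0,1,-2,-1,0,1,-1,0], [0,0,0,0,0,0,0,0,-2,-1,0,1,2,0,0,-2,1,-2,0,-1,-1,0,1,-2,-1,0,1,-1], [0,0,0,0,0,0,0,0,0,-2,-1,0,1,2,1,0,-2,1,-2,0,-1,-1,0,1,-2,-1,0,1], [-2,0,0,0,0,0,0,0,0,0,-2,-1,0,1,-1,1,0,-2,1,-2,0,-1,-1,0,1,-2,-1,0], [-1,-2,0,0,0,0,0,0,0,0,0,-2,-1,0,0,-1,1,0,-2,1,-2,0,-1,-1,0,1,-2,-1], [1,2,-1,0,1,1,0,2,-1,2,0,-1,1,0,0,-1,-2,0,0,0,0,0,0,0,0,0,-2,-1], [0,1,2,-1,0,1,1,0,2,-1,2,0,-1,1,1,0,-1,-2,0,0,0,0,0,0,0,0,0,-2], [-1,0,1,2,-1,0,1,1,0,2,-1,2,0,-1,2,1,0,-1,-2,0,0,0,0,0,0,0,0,0], [1,-1,0,1,2,-1,0,1,1,0,2,-1,2,0,0,2,1,0,-1,-2,0,0,0,0,0,0,0,0], [0,1,-1,0,1,2,-1,0,1,1,0,2,-1,2,0,0,2,1,0,-1,-2,0,0,0,0,0,0,0], [-2,0,1,-1,0,1,2,-1,0,1,1,0,2,-1,0,0,0,2,1,0,-1,-2,0,0,0,0,0,0], [1,-2,0,1,-1,0,1,2,-1,0,1,1,0,2,0,0,0,0,2,1,0,-1,-2,0,0,0,0,0],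 [-2,1,-2,0,1,-1,0,1,2,-1,0,1,1,0,0,0,0,0,0,2,1,0,-1,-2,0,0,0,0], [0,-2,1,-2,0,1,-1,0,1,2,-1,0,1,1,0,0,0,0,0,0,2,1,0,-1,-2,0,0,0], [-1,0,-2,1,-2,0,1,-1,0,1,2,-1,0,1,0,0,0,0,0,0,0,2,1,0,-1,-2,0,0], [-1,-1,0,-2,1,-2,0,1,-1,0,1,2,-1,0,0,0,0,0,0,0,0,0,2,1,0,-1,-2,0], [0,-1,-1,0,-2,1,-2,0,1,-1,0,1,2,-1,0,0,0,0,0,0,0,0,0,2,1,0,-1,-2], [1,0,-1,-1,0,-2,1,-2,0,1,-1,0,1,2,2,0,0,0,0,0,0,0,0,0,2,1,0,-1], [-2,1,0,-1,-1,0,-2,1,-2,0,1,-1,0,1,1,2,0,0,0,0,0,0,0,0,0,2,1,0]]"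

lemma Dl_eq: "map (\<lambda>i. map (\<lambda>j. D28 i j) [0..<28]) [0..<28] = Dl"
  by (simp add: Dl_def D28_def matA_def matB_def negacirc_def rA_def rB_def upt_rec)

lemma D28_Dl: "i < 28 \<Longrightarrow> j < 28 \<Longrightarrow> D28 i j = Dl ! i ! j"
  by (simp add: Dl_eq[symmetric])

lemma Dl_len: "length Dl = 28" "\<forall>r\<in>set Dl. length r = 28"
  by (simp_all add: Dl_eq[symmetric])

lemma tr_nth:
  assumes "\<forall>r\<in>set xs. length r = n" "i < n" "j < length xs"
  shows "transpose xs ! i ! j = xs ! j ! i"
proof -
  have f: "filter (\<lambda>ys. i < length ys) xs = xs" using assms by (auto intro: filter_True)
  have "xs \<noteq> []" using assms by auto
  have "length (transpose xs) = n"
  proof -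
    have "foldr (\<lambda>xs. max (length xs)) xs 0 = n" if "xs \<noteq> []" "\<forall>r\<in>set xs. length r = n" for xs :: "'a list list"
      using that
    proof (induction xs)
      case Nil thus ?case by simp
    next
      case (Cons a xs) thus ?case by (cases "xs = []") auto
    qed
    thus ?thesis using assms \<open>xs \<noteq> []\<close> by (simp add: length_transpose)
  qed
  hence "transpose xs ! i = map (\<lambda>xs. xs ! i) (filter (\<lambda>ys. i < length ys) xs)"
    using assms by (intro nth_transpose) simp
  thus ?thesis using f assms by simp
qed

lemma Dl_skew: "transpose Dl = map (map uminus) Dl"
  by (simp add: Dl_def)

lemma Dskew: "i < 28 \<Longrightarrow> j < 28 \<Longrightarrow> D28 j i = - D28 i j"
proof -
  assume a: "i < 28" "j < 28"
  have "transpose Dl ! i ! j = Dl ! j ! i" using tr_nth[OF Dl_len(2)] a Dl_len(1) by simp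
  also have "transpose Dl ! i ! j = - (Dl ! i ! j)" unfolding Dl_skew using a Dl_len by (simp add: Dl_eq[symmetric])
  finally show ?thesis using a by (simp add: D28_Dl)
qed

definition dots :: "int list list \<Rightarrow> int list list \<Rightarrow> int list list" where
 "dots P Q = map (\<lambda>r. map (\<lambda>r'. sum_list (map2 (*) r r')) Q) P"

lemma Dl_dots: "dots Dl Dl = map (\<lambda>i. map (\<lambda>j. if i = j then 29 else 0) [0..<28]) [0..<28]"
  by (simp add: Dl_def dots_def upt_rec)

lemma sum_list_map2: "length r = n \<Longrightarrow> length r' = n \<Longrightarrow> sum_list (map2 (*) r r') = (\<Sum>l<n. r!l * r'!l :: int)"
proof (induction r arbitrary: r' n)
  case Nil thus ?case by simp
next
  case (Cons a r)
  then obtain b r'' where r': "r' = b # r''" by (cases r') auto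
  have "(\<Sum>l<n. (a#r)!l * r'!l) = (\<Sum>l<Suc (length r). (a#r)!l * r'!l)" using Cons by simp
  also have "\<dots> = a * b + (\<Sum>l<length r. r!l * r''!l)" unfolding r' sum.lessThan_Suc_shift by simp
  finally show ?case using Cons r' by simp
qed

lemma DDt: "i < 28 \<Longrightarrow> j < 28 \<Longrightarrow> (\<Sum>l<28. D28 i l * D28 j l) = (if i = j then 29 else 0)"
proof -
  assume a: "i < 28" "j < 28"
  have "dots Dl Dl ! i ! j = sum_list (map2 (*) (Dl!i) (Dl!j))" unfolding dots_def using a Dl_len by simp
  also have "\<dots> = (\<Sum>l<28. Dl!i!l * Dl!j!l)" using a Dl_len by (intro sum_list_map2) auto
  also have "\<dots> = (\<Sum>l<28. D28 i l * D28 j l)" using a by (intro sum.cong) (auto simp: D28_Dl)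
  finally show ?thesis using a unfolding Dl_dots by simp
qed

definition colperm :: "(nat \<times> int) list \<Rightarrow> int list \<Rightarrow> int list" where
  "colperm qs r = map (\<lambda>(q,s). s * r!q) qs"

definition KDmat :: "(nat \<Rightarrow> nat) \<Rightarrow> (nat \<Rightarrow> int) \<Rightarrow> int list list" where
  "KDmat q s = map (colperm (map (\<lambda>j. (q j, s j)) [0..<28])) Dl"

lemma KD_J_chk: "transpose (KDmat qJ sJ) = KDmat qJ sJ"
  by (simp add: KDmat_def colperm_def Dl_def upt_rec qJ_def sJ_def jq_def js_def)
lemma KD_X_chk: "transpose (KDmat qX sX) = KDmat qX sX"
  by (simp add: KDmat_def colperm_def Dl_def upt_rec qX_def sX_def rq_def rs_def)
lemma KD_Y_chk: "transpose (KDmat qY sY) = KDmat qY sY"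
  by (simp add: KDmat_def colperm_def Dl_def upt_rec qY_def sY_def qX_def sX_def rq_def rs_def qJ_def sJ_def jq_def js_def)


lemma q_bnd_chk: "list_all (\<lambda>j. qJ j < 28 \<and> qX j < 28 \<and> qY j < 28) [0..<28]"
  by (simp add: upt_rec qY_def qX_def rq_def qJ_def jq_def)

lemma q_bnd: "j < 28 \<Longrightarrow> qJ j < 28" "j < 28 \<Longrightarrow> qX j < 28" "j < 28 \<Longrightarrow> qY j < 28"
  using q_bnd_chk by (simp_all add: all_lt_list[symmetric])

lemma KD_from:
  assumes t: "transpose (KDmat q s) = KDmat q s" and b: "\<forall>j<28. q j < 28" and ij: "i < 28" "j < 28"
  shows "s j * D28 i (q j) = s i * D28 j (q i)"
proof -
  have len: "\<forall>r\<in>set (KDmat q s). length r = 28" "length (KDmat q s) = 28"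
    by (auto simp: KDmat_def colperm_def Dl_len)
  have e: "KDmat q s ! i ! j = s j * D28 i (q j)" if "i < 28" "j < 28" for i j
    using that b Dl_len by (simp add: KDmat_def colperm_def D28_Dl)
  have "KDmat q s ! j ! i = transpose (KDmat q s) ! i ! j" using tr_nth[OF len(1)] ij len(2) by simp
  also have "\<dots> = KDmat q s ! i ! j" using t by simp
  finally show ?thesis using e ij by simp
qed

lemma KD_J: "i < 28 \<Longrightarrow> j < 28 \<Longrightarrow> sJ j * D28 i (qJ j) = sJ i * D28 j (qJ i)"
  using KD_from[OF KD_J_chk] q_bnd by blast
lemma KD_X: "i < 28 \<Longrightarrow> j < 28 \<Longrightarrow> sX j * D28 i (qX j) = sX i * D28 j (qX i)"
  using KD_from[OF KD_X_chk] q_bnd by blast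
lemma KD_Y: "i < 28 \<Longrightarrow> j < 28 \<Longrightarrow> sY j * D28 i (qY j) = sY i * D28 j (qY i)"
  using KD_from[OF KD_Y_chk] q_bnd by blast

lemma perm_chk: "list_all (\<lambda>a. list_all (\<lambda>i. PP a i < 56 \<and> PP a (PP a i) = i \<and> SS a (PP a i) = - SS a i \<and> SS a i * SS a i = 1) [0..<56]) [0..<4]"
  by (simp add: upt_rec PP_def SS_def bd_def bs_def p2_def s2_def qY_def sY_def qX_def sX_def rq_def rs_def qJ_def sJ_def jq_def js_def)

lemma comm_chk: "list_all (\<lambda>a. list_all (\<lambda>b. a < b \<longrightarrow> list_all (\<lambda>i. PP b (PP a i) = PP a (PP b i) \<and>
   SS a i * SS b (PP b (PP a i)) + SS b i * SS a (PP a (PP b i)) = 0) [0..<56]) [0..<4]) [0..<4]"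
  by (simp add: upt_rec PP_def SS_def bd_def bs_def p2_def s2_def qY_def sY_def qX_def sX_def rq_def rs_def qJ_def sJ_def jq_def js_def)

lemma pf: assumes "a < 4" "i < 56"
  shows "PP a i < 56" "PP a (PP a i) = i" "SS a (PP a i) = - SS a i" "SS a i * SS a i = 1"
  using perm_chk assms by (simp_all add: all_lt_list[symmetric])

lemma cf: assumes "a < b" "b < 4" "i < 56"
  shows "PP b (PP a i) = PP a (PP b i)" "SS a i * SS b (PP b (PP a i)) + SS b i * SS a (PP a (PP b i)) = 0"
proof -
  have h: "\<forall>a<4. \<forall>b<4. a < b \<longrightarrow> (\<forall>i<56. PP b (PP a i) = PP a (PP b i) \<and>
   SS a i * SS b (PP b (PP a i)) + SS b i * SS a (PP a (PP b i)) = 0)"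
    using comm_chk by (simp only: all_lt_list[symmetric])
  show "PP b (PP a i) = PP a (PP b i)" using h assms by (meson less_trans)
  show "SS a i * SS b (PP b (PP a i)) + SS b i * SS a (PP a (PP b i)) = 0" using h assms by (meson less_trans)
qed




lemma Vsk: assumes "a < 4" "i < 56" "j < 56"
  shows "(if i = PP a j then SS a j else 0) + (if j = PP a i then SS a i else 0) = 0"
proof (cases "i = PP a j")
  case True
  hence "PP a i = j" using pf[OF assms(1,3)] by simp
  moreover have "SS a i = - SS a j" using True pf[OF assms(1,3)] by simp
  ultimately show ?thesis using True by simp
next
  case False
  hence "j \<noteq> PP a i" using pf[OF assms(1,2)] by auto
  thus ?thesis using False by simp
qed

lemma VV_lt: assumes "a < b" "b < 4" "i < 56" "j < 56"
  shows "(if PP a i = PP b j then SS a i * SS b j else 0) + (if PP b i = PP a j then SS b i * SS a j else 0) = 0"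
proof -
  have a4: "a < 4" using assms by simp
  have e1: "PP a i = PP b j \<longleftrightarrow> j = PP b (PP a i)" using pf[OF assms(2) assms(4)] pf[OF a4 assms(3)] pf[OF assms(2)] by auto
  have e2: "PP b i = PP a j \<longleftrightarrow> j = PP b (PP a i)"
    using pf[OF a4 assms(4)] pf[OF assms(2) assms(3)] pf[OF a4] cf[OF assms(1,2,3)] by auto
  show ?thesis
  proof (cases "j = PP b (PP a i)")
    case True
    have "SS a i * SS b (PP b (PP a i)) + SS b i * SS a (PP a (PP b i)) = 0" by (rule cf[OF assms(1,2,3)])
    thus ?thesis using True e1 e2 cf(1)[OF assms(1,2,3)] by simp
  next
    case False thus ?thesis using e1 e2 by simp
  qed
qed

lemma VV: assumes "a < 4" "b < 4" "i < 56" "j < 56"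
  shows "(if PP a i = PP b j then SS a i * SS b j else 0) + (if PP b i = PP a j then SS b i * SS a j else 0) = (if a = b \<and> i = j then 2 else 0)"
proof -
  consider "a = b" | "a < b" | "b < a" by linarith
  thus ?thesis
  proof cases
    case 1
    have "PP a i = PP a j \<longleftrightarrow> i = j" using pf[OF assms(1,3)] pf[OF assms(1,4)] by metis
    thus ?thesis using 1 pf(4)[OF assms(1,3)] by auto
  next
    case 2 thus ?thesis using VV_lt[OF 2 assms(2,3,4)] by simp
  next
    case 3 thus ?thesis using VV_lt[OF 3 assms(1,3,4)] by (simp add: add.commute mult.commute)
  qed
qed

lemma Em_bd: assumes KD: "\<And>i j. i < 28 \<Longrightarrow> j < 28 \<Longrightarrow> s j * D28 i (q j) = s i * D28 j (q i)"
  and qb: "\<And>j. j < 28 \<Longrightarrow> q j < 28" and ij: "i < 56" "j < 56"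
  shows "bs s j * Em i (bd q j) + bs s i * Em j (bd q i) = 0"
proof -
  consider "i < 28" "j < 28" | "i < 28" "\<not> j < 28" | "\<not> i < 28" "j < 28" | "\<not> i < 28" "\<not> j < 28" by blast
  thus ?thesis
  proof cases
    case 1 thus ?thesis using qb[of i] qb[of j] by (simp add: Em_def bd_def bs_def)
  next
    case 2
    have "s (j-28) * D28 i (q (j-28)) = s i * D28 (j-28) (q i)" using 2 ij by (intro KD) auto
    thus ?thesis using 2 qb[of i] qb[of "j-28"] ij by (simp add: Em_def bd_def bs_def)
  next
    case 3
    have "s j * D28 (i-28) (q j) = s (i-28) * D28 j (q (i-28))" using 3 ij by (intro KD) auto
    thus ?thesis using 3 qb[of j] qb[of "i-28"] ij by (simp add: Em_def bd_def bs_def)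
  next
    case 4 thus ?thesis using qb[of "i-28"] qb[of "j-28"] ij by (simp add: Em_def bd_def bs_def)
  qed
qed

lemma Em_p2: assumes ij: "i < 56" "j < 56"
  shows "s2 j * Em i (p2 j) + s2 i * Em j (p2 i) = 0"
proof -
  consider "i < 28" "j < 28" | "i < 28" "\<not> j < 28" | "\<not> i < 28" "j < 28" | "\<not> i < 28" "\<not> j < 28" by blast
  thus ?thesis
  proof cases
    case 1 thus ?thesis using Dskew[of i j] by (simp add: Em_def p2_def s2_def)
  next
    case 2 thus ?thesis using ij by (auto simp: Em_def p2_def s2_def)
  next
    case 3 thus ?thesis using ij by (auto simp: Em_def p2_def s2_def)
  next
    case 4 thus ?thesis using Dskew[of "i-28" "j-28"] ij by (auto simp: Em_def p2_def s2_def)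
  qed
qed

lemma Em_V: assumes "a < 4" "i < 56" "j < 56"
  shows "SS a j * Em i (PP a j) + SS a i * Em j (PP a i) = 0"
proof -
  have "a = 0 \<or> a = 1 \<or> a = 2 \<or> a = 3" using assms by linarith
  thus ?thesis
    using Em_bd[OF KD_J q_bnd(1) assms(2,3)] Em_bd[OF KD_X q_bnd(2) assms(2,3)] Em_bd[OF KD_Y q_bnd(3) assms(2,3)]
      Em_p2[OF assms(2,3)]
    by (auto simp: PP_def SS_def)
qed

lemma GV: assumes "a < 4" "i < 56" "j < 56"
  shows "SS a j * Gm i (PP a j) + SS a i * Gm j (PP a i) = 0"
proof -
  have "SS a j * Gm i (PP a j) + SS a i * Gm j (PP a i) =
     ((if i = PP a j then SS a j else 0) + (if j = PP a i then SS a i else 0)) + (SS a j * Em i (PP a j) + SS a i * Em j (PP a i))"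
    by (simp add: Gm_def algebra_simps)
  thus ?thesis using Vsk[OF assms] Em_V[OF assms] by simp
qed

lemma Em_skew: "i < 56 \<Longrightarrow> j < 56 \<Longrightarrow> Em i j + Em j i = 0"
  using Dskew[of i "j-28"] Dskew[of "i-28" j] by (auto simp: Em_def)

lemma Gs: "i < 56 \<Longrightarrow> j < 56 \<Longrightarrow> Gm i j + Gm j i = (if i = j then 2 else 0)"
  using Em_skew[of i j] by (auto simp: Gm_def algebra_simps)

lemma sum_split: "(\<Sum>l<(m+n::nat). f l) = (\<Sum>l<m. f l) + (\<Sum>l<n. f (l+m) :: int)"
  by (induction n) (simp_all add: add.commute add.left_commute)

lemma Gm_lo: "l < 28 \<Longrightarrow> Gm i l = (if i < 28 then (if i = l then 1 else 0) else D28 (i-28) l)"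
  by (simp add: Gm_def Em_def)
lemma Gm_hi: "l < 28 \<Longrightarrow> Gm i (l+28) = (if i < 28 then D28 i l else (if i = l + 28 then 1 else 0))"
  by (simp add: Gm_def Em_def)

lemma GG: assumes ij: "i < 56" "j < 56"
  shows "(\<Sum>l<56. Gm i l * Gm j l) = (if i = j then 30 else 0)"
proof -
  have "(\<Sum>l<56. Gm i l * Gm j l) = (\<Sum>l<28. Gm i l * Gm j l) + (\<Sum>l<28. Gm i (l+28) * Gm j (l+28))"
    using sum_split[where m=28 and n=28] by simp
  also have "(\<Sum>l<28. Gm i l * Gm j l) = (\<Sum>l<28. (if i < 28 then (if i = l then 1 else 0) else D28 (i-28) l) * (if j < 28 then (if j = l then 1 else 0) else D28 (j-28) l))"
    by (intro sum.cong) (simp_all add: Gm_lo)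
  also have "(\<Sum>l<28. Gm i (l+28) * Gm j (l+28)) = (\<Sum>l<28. (if i < 28 then D28 i l else (if i = l + 28 then 1 else 0)) * (if j < 28 then D28 j l else (if j = l + 28 then 1 else 0)))"
    by (intro sum.cong) (simp_all add: Gm_hi)
  finally have e: "(\<Sum>l<56. Gm i l * Gm j l) = (\<Sum>l<28. (if i < 28 then (if i = l then 1 else 0) else D28 (i-28) l) * (if j < 28 then (if j = l then 1 else 0) else D28 (j-28) l))
     + (\<Sum>l<28. (if i < 28 then D28 i l else (if i = l + 28 then 1 else 0)) * (if j < 28 then D28 j l else (if j = l + 28 then 1 else 0)))" .
  consider "i < 28" "j < 28" | "i < 28" "\<not> j < 28" | "\<not> i < 28" "j < 28" | "\<not> i < 28" "\<not> j < 28" by blast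
  thus ?thesis
  proof cases
    case 1
    have "(\<Sum>l<28::nat. (if i = l then 1 else 0) * (if j = l then 1 else (0::int))) = (if i = j then 1 else 0)"
      using 1 by (simp add: if_distrib[of "\<lambda>x. x * _"] sum.delta cong: if_cong)
    thus ?thesis using e 1 DDt[OF 1] by simp
  next
    case 2
    have s1: "(\<Sum>l<28::nat. (if i = l then 1 else 0) * D28 (j-28) l) = D28 (j-28) i"
      using 2 by (simp add: if_distrib[of "\<lambda>x. x * _"] sum.delta cong: if_cong)
    have s2: "(\<Sum>l<28::nat. D28 i l * (if j = l + 28 then 1 else 0)) = D28 i (j-28)"
    proof -
      have "(\<Sum>l<28::nat. D28 i l * (if j = l + 28 then 1 else 0)) = (\<Sum>l<28::nat. D28 i l * (if l = j - 28 then 1 else 0))"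
        using 2 by (intro sum.cong) auto
      thus ?thesis using 2 ij by (auto simp: sum_delta_r)
    qed
    show ?thesis using e 2 s1 s2 Dskew[of i "j-28"] ij by simp
  next
    case 3
    have s1: "(\<Sum>l<28::nat. D28 (i-28) l * (if j = l then 1 else 0)) = D28 (i-28) j"
      using 3 by (simp add: if_distrib[of "\<lambda>x. _ * x"] sum.delta cong: if_cong)
    have s2: "(\<Sum>l<28::nat. (if i = l + 28 then 1 else 0) * D28 j l) = D28 j (i-28)"
    proof -
      have "(\<Sum>l<28::nat. (if i = l + 28 then 1 else 0) * D28 j l) = (\<Sum>l<28::nat. D28 j l * (if l = i - 28 then 1 else 0))"
        using 3 by (intro sum.cong) auto
      thus ?thesis using 3 ij by (auto simp: sum_delta_r)
    qed
    show ?thesis using e 3 s1 s2 Dskew[of j "i-28"] ij by simp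
  next
    case 4
    have s2: "(\<Sum>l<28::nat. (if i = l + 28 then 1 else 0) * (if j = l + 28 then 1 else (0::int))) = (if i = j then 1 else 0)"
    proof -
      have "(\<Sum>l<28::nat. (if i = l + 28 then 1 else 0) * (if j = l + 28 then 1 else (0::int))) = (\<Sum>l<28::nat. (if j = i then 1 else 0) * (if l = i - 28 then 1 else 0))"
        using 4 by (intro sum.cong) auto
      thus ?thesis using 4 ij by (auto simp: sum_delta_r)
    qed
    have "(\<Sum>l<28. D28 (i-28) l * D28 (j-28) l) = (if i = j then 29 else 0)" using DDt[of "i-28" "j-28"] 4 ij by auto
    thus ?thesis using e 4 s2 by simp
  qed
qed




lemma memb: assumes ij: "i < 56" "j < 56"
  shows "5 dvd (Gm i j - (\<Sum>i'<28. Gm i i' * G_C5 i' j))"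
proof (cases "i < 28")
  case True
  have "(\<Sum>i'<28. Gm i i' * G_C5 i' j) = (\<Sum>i'<28. (if i' = i then 1 else 0) * G_C5 i' j)"
    using True by (intro sum.cong) (auto simp: Gm_lo)
  also have "\<dots> = G_C5 i j" using True sum_delta_l[where f="\<lambda>i'. G_C5 i' j" and c=i and v=1 and N=28] by simp
  also have "\<dots> = Gm i j" using True by (auto simp: G_C5_def Gm_def Em_def)
  finally show ?thesis by simp
next
  case False
  show ?thesis
  proof (cases "j < 28")
    case True
    have "(\<Sum>i'<28. Gm i i' * G_C5 i' j) = (\<Sum>i'<28. D28 (i-28) i' * (if i' = j then 1 else 0))"
      using False True by (intro sum.cong) (auto simp: Gm_lo G_C5_def)
    also have "\<dots> = D28 (i-28) j" using True sum_delta_r[where f="\<lambda>i'. D28 (i-28) i'" and c=j and v=1 and N=28] by simp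
    also have "\<dots> = Gm i j" using False True by (auto simp: Gm_def Em_def)
    finally show ?thesis by simp
  next
    case J: False
    have "(\<Sum>i'<28. Gm i i' * G_C5 i' j) = (\<Sum>i'<28. - (D28 (i-28) i' * D28 (j-28) i'))"
    proof (intro sum.cong refl)
      fix i' assume "i' \<in> {..<28::nat}"
      hence "D28 i' (j-28) = - D28 (j-28) i'" using Dskew[of "j-28" i'] ij J by auto
      thus "Gm i i' * G_C5 i' j = - (D28 (i-28) i' * D28 (j-28) i')" using False J \<open>i' \<in> _\<close> by (auto simp: Gm_lo G_C5_def)
    qed
    also have "\<dots> = - (if i = j then 29 else 0)" using DDt[of "i-28" "j-28"] False J ij by (auto simp: sum_negf)
    finally have e: "(\<Sum>i'<28. Gm i i' * G_C5 i' j) = - (if i = j then 29 else 0)" .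
    have "Gm i j = (if i = j then 1 else 0)" using False J by (simp add: Gm_def Em_def)
    thus ?thesis using e by auto
  qed
qed

lemma sum4_lt: "(\<Sum>a<(4::nat). f a) = f 0 + f 1 + f 2 + (f 3 :: int)"
  by (simp add: numeral_eq_Suc)

lemma gram56: "i < 56 \<Longrightarrow> j < 56 \<Longrightarrow> (\<Sum>l<56. Ff u t x Gm PP SS i l * Ff u t x Gm PP SS j l) =
     (if i = j then 5 * (6*u^2 + 2*u*t + 5*t^2 + 5*(\<Sum>a<4. x a ^ 2)) else 0)"
  by (rule gram_generic[where N=56]) (auto simp: GG Gs GV pf Vsk VV)

lemma frame_exists:
  fixes u t :: int and x :: "nat \<Rightarrow> int" and k :: nat
  assumes kdef: "int k = 6*u^2 + 2*u*t + 5*t^2 + 5*(\<Sum>a<4. x a ^ 2)"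
  shows "has_frame (constructionA 5 56 C5_D28) 56 (real k)"
proof -
  define F where "F = Ff u t x Gm PP SS"
  define f where "f = (\<lambda>i l. if l < 56 then real_of_int (F i l) / sqrt 5 else 0)"
  have inner: "(\<Sum>l<56. f i l * f j l) = (if i = j then real k else 0)" if "i < 56" "j < 56" for i j
  proof -
    have "(\<Sum>l<56. f i l * f j l) = (\<Sum>l<56. real_of_int (F i l * F j l) / 5)"
      by (intro sum.cong) (auto simp: f_def)
    also have "\<dots> = real_of_int (\<Sum>l<56. F i l * F j l) / 5"
      by (simp add: sum_divide_distrib)
    also have "\<dots> = (if i = j then real k else 0)"
    proof -
      have g: "(\<Sum>l<56. F i l * F j l) = (if i = j then 5 * int k else 0)"
        using gram56[OF that, of u t x] kdef unfolding F_def by simp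
      show ?thesis unfolding g by simp
    qed
    finally show ?thesis .
  qed
  have memL: "f i \<in> constructionA 5 56 C5_D28" if i: "i < 56" for i
  proof -
    define w where "w = (\<lambda>i'. u * Gm i i')"
    define c where "c = (\<lambda>j. if j < 56 then (\<Sum>i'<28. w i' * G_C5 i' j) mod 5 else (0::int))"
    define z where "z = (\<lambda>j. if j < 56 then (F i j - c j) div 5 else (0::int))"
    have cC: "c \<in> C5_D28" unfolding C5_D28_def gen_code_def c_def by blast
    have dv: "5 dvd (F i j - c j)" if j: "j < 56" for j
    proof -
      define X where "X = (\<Sum>i'<28. Gm i i' * G_C5 i' j)"
      have cj: "c j = (u * X) mod 5" unfolding c_def X_def w_def using j
        by (simp add: sum_distrib_left mult.assoc)
      have "(u * X) mod 5 = u * X - 5 * ((u * X) div 5)" by (simp add: minus_div_mult_eq_mod[symmetric])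
      hence "F i j - c j = u * (Gm i j - X) + 5 * (Mf t x PP SS i j + (u * X) div 5)"
        unfolding cj F_def Ff_def by (simp add: algebra_simps)
      moreover have "5 dvd (Gm i j - X)" unfolding X_def by (rule memb[OF i j])
      ultimately show ?thesis by simp
    qed
    have "f i = (\<lambda>j. (of_int (c j) + of_nat 5 * of_int (z j)) / sqrt (of_nat 5))"
    proof
      fix j
      show "f i j = (of_int (c j) + of_nat 5 * of_int (z j)) / sqrt (of_nat 5)"
      proof (cases "j < 56")
        case True
        have "c j + 5 * z j = F i j" using dv[OF True] True unfolding z_def by simp
        hence "real_of_int (c j) + 5 * real_of_int (z j) = real_of_int (F i j)" by (metis of_int_add of_int_mult of_int_numeral)
        thus ?thesis using True unfolding f_def by simp
      next
        case False thus ?thesis unfolding f_def c_def z_def by simp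
      qed
    qed
    moreover have "\<forall>j\<ge>56. z j = 0" unfolding z_def by simp
    ultimately show ?thesis unfolding constructionA_def using cC by blast
  qed
  show ?thesis unfolding has_frame_def using inner memL by blast
qed

lemma sq4_exists: "\<exists>x :: nat \<Rightarrow> int. (\<Sum>a<(4::nat). x a ^ 2) = int n"
proof -
  obtain a b c d where "int n = a^2+b^2+c^2+d^2" using lagrange4[of n] unfolding sum4_def by blast
  thus ?thesis by (intro exI[of _ "\<lambda>i. if i = 0 then a else if i = 1 then b else if i = 2 then c else d"]) (simp add: sum4_lt)
qed

lemma frame_gn:
  assumes "int k = 6*u^2 + 2*u*t + 5*t^2 + 5 * int n"
  shows "has_frame (constructionA 5 56 C5_D28) 56 (real k)"
proof -
  obtain x :: "nat \<Rightarrow> int" where "(\<Sum>a<(4::nat). x a ^ 2) = int n" using sq4_exists by blast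
  thus ?thesis using frame_exists[of k u t x] assms by simp
qed

theorem lemma6p1:
  fixes k :: nat
  assumes "k \<ge> 5"
    and "\<not> (\<exists>m1 m2 m3 m4 m5 :: nat. k = 2^m1 * 3^m2 * 7^m3 * 17^m4 * 23^m5)"
  shows "has_frame (constructionA 5 56 C5_D28) 56 (real k)"
proof -
  have n7: "k \<noteq> 7" using assms(2) by (metis mult_1 power_0 power_one_right mult.commute)
  have n8: "k \<noteq> 8" using assms(2)[unfolded not_ex, rule_format, of 3 0 0 0 0] by simp
  have n12: "k \<noteq> 12" using assms(2)[unfolded not_ex, rule_format, of 2 1 0 0 0] by simp
  have n17: "k \<noteq> 17" using assms(2)[unfolded not_ex, rule_format, of 0 0 0 1 0] by simp
  have "k mod 5 = 0 \<or> k mod 5 = 1 \<or> k mod 5 = 2 \<or> k mod 5 = 3 \<or> k mod 5 = 4" by arith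
  moreover
  { assume "k mod 5 = 0"
    hence "int k = 6*0^2 + 2*0*0 + 5*0^2 + 5 * int (k div 5)" by (simp; presburger)
    hence ?thesis by (rule frame_gn) }
  moreover
  { assume h: "k mod 5 = 1"
    hence "k \<ge> 6" using assms(1) by presburger
    hence "int k = 6*1^2 + 2*1*0 + 5*0^2 + 5 * int ((k - 6) div 5)" using h by (simp; presburger)
    hence ?thesis by (rule frame_gn) }
  moreover
  { assume h: "k mod 5 = 4"
    hence "k \<ge> 9" using assms(1) by presburger
    hence "int k = 6*1^2 + 2*1*(-1) + 5*(-1)^2 + 5 * int ((k - 9) div 5)" using h by (simp; presburger)
    hence ?thesis by (rule frame_gn) }
  moreover
  { assume h: "k mod 5 = 3"
    hence "k \<ge> 13" using assms(1) n8 by presburger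
    hence "int k = 6*1^2 + 2*1*1 + 5*1^2 + 5 * int ((k - 13) div 5)" using h by (simp; presburger)
    hence ?thesis by (rule frame_gn) }
  moreover
  { assume h: "k mod 5 = 2"
    hence "k \<ge> 22" using assms(1) n7 n12 n17 by presburger
    hence "int k = 6*(-1)^2 + 2*(-1)*2 + 5*2^2 + 5 * int ((k - 22) div 5)" using h by (simp; presburger)
    hence ?thesis by (rule frame_gn) }
  ultimately show ?thesis by meson
qed


end
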